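(* Let $U\cong\mathbb R^2$ be Euclidean, $\Omega\subset U$ convex compact with $0\in\operatorname{int}\Omega$, and define the Bellman function $$\mathcal B(x_0,y_0)=\inf\Big\{\tfrac12\int_0^{+\infty}\langle x(t),x(t)\rangle\,dt:\ \ddot x(t)\in\Omega \text{ a.e.},\ x(0)=x_0,\ \dot x(0)=y_0\Big\},\qquad (x_0,y_0)\in U\oplus U.$$ Then $\mathcal B$ is strictly convex on $U\oplus U$.
   Context: Admissible trajectories are those $x$ with $\ddot x=u$ for a measurable control $u(t)\in\Omega$. *)

theory Defs
  imports "HOL-Analysis.Analysis"
begin

text \<open>A trajectory x on [0,oo) is admissible for the data (x0,y0) if
  x(t) = x0 + int_0^t y, y(t) = y0 + int_0^t u with u Lebesgue measurable and
  u(t) in Omega for almost every t >= 0; i.e. x is C^1, its derivative is absolutely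
  continuous, x(0)=x0, x'(0)=y0 and x'' = u a.e.\<close>
definition admissible :: "(real^2) set \<Rightarrow> real^2 \<Rightarrow> real^2 \<Rightarrow> (real \<Rightarrow> real^2) \<Rightarrow> bool" where
  "admissible \<Omega> x0 y0 x \<longleftrightarrow>
     (\<exists>y u. u \<in> borel_measurable lebesgue \<and>
        (AE t in lebesgue. t \<ge> 0 \<longrightarrow> u t \<in> \<Omega>) \<and>
        (\<forall>t\<ge>0. y t = y0 + integral {0..t} u) \<and>
        (\<forall>t\<ge>0. x t = x0 + integral {0..t} y))"

definition cost :: "(real \<Rightarrow> real^2) \<Rightarrow> ennreal" where
  "cost x = (\<integral>\<^sup>+ t. indicator {0..} t * ennreal ((x t \<bullet> x t) / 2) \<partial>lborel)"

definition bellman :: "(real^2) set \<Rightarrow> (real^2) \<times> (real^2) \<Rightarrow> ennreal" where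
  "bellman \<Omega> p = (INF x\<in>{x. admissible \<Omega> (fst p) (snd p) x}. cost x)"

definition strictly_convex_enn :: "('v::real_vector \<Rightarrow> ennreal) \<Rightarrow> bool" where
  "strictly_convex_enn f \<longleftrightarrow>
     (\<forall>p q t. p \<noteq> q \<longrightarrow> 0 < t \<longrightarrow> t < 1 \<longrightarrow>
        f (t *\<^sub>R p + (1 - t) *\<^sub>R q) < ennreal t * f p + ennreal (1 - t) * f q)"

end

theory Submission
  imports Defs
begin

lemma int_bound:
  fixes f :: "real \<Rightarrow> 'a::euclidean_space"
  assumes "f integrable_on {a..b}" "a \<le> b" "0 \<le> B" "\<And>s. s \<in> {a..b} \<Longrightarrow> norm (f s) \<le> B"
  shows "norm (integral {a..b} f) \<le> B * (b - a)"
proof -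
  have "norm (integral {a..b} f) \<le> B * Henstock_Kurzweil_Integration.content {a..b}"
    by (rule has_integral_bound_real[of B "{}"]) (use assms in auto)
  then show ?thesis using assms(2) by simp
qed

lemma meas_integrable:
  fixes u :: "real \<Rightarrow> real^2"
  assumes "u \<in> borel_measurable lebesgue" "\<And>t. norm (u t) \<le> R"
  shows "u integrable_on {a..b}"
proof (rule measurable_bounded_by_integrable_imp_integrable[where g="\<lambda>_. R"])
  show "u \<in> borel_measurable (lebesgue_on {a..b})"
    using assms(1) by (simp add: measurable_restrict_space1)
qed (use assms in auto)

lemma lipF:
  fixes f :: "real \<Rightarrow> real^2"
  assumes "\<And>a b. f integrable_on {a..b}" "0 \<le> M"
    "\<And>t. 0 \<le> t \<Longrightarrow> t \<le> b \<Longrightarrow> norm (f t) \<le> M" "s \<le> b" "s' \<le> b"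
  shows "norm (integral {0..s} f - integral {0..s'} f) \<le> M * \<bar>s - s'\<bar>"
proof -
  have key: "norm (integral {0..s} f - integral {0..s'} f) \<le> M * (s' - s)"
    if "s \<le> s'" "s' \<le> b" for s s'
  proof (cases "s' < 0")
    case True
    then show ?thesis using that assms(2) by simp
  next
    case False
    show ?thesis
    proof (cases "s < 0")
      case True
      have "norm (integral {0..s'} f) \<le> M * (s' - 0)"
        by (rule int_bound) (use False assms that in auto)
      moreover have "M * s' \<le> M * (s' - s)" using True assms(2) by (simp add: mult_left_mono)
      ultimately show ?thesis using True by simp
    next
      case False
      have "integral {0..s} f + integral {s..s'} f = integral {0..s'} f"
        by (rule Henstock_Kurzweil_Integration.integral_combine) (use False that assms in auto)
      moreover have "norm (integral {s..s'} f) \<le> M * (s' - s)"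
        by (rule int_bound) (use False assms that in auto)
      ultimately show ?thesis by (metis add_diff_cancel_left' norm_minus_commute)
    qed
  qed
  show ?thesis
  proof (cases "s \<le> s'")
    case True then show ?thesis using key[of s s'] assms by simp
  next
    case False then show ?thesis using key[of s' s] assms by (simp add: norm_minus_commute)
  qed
qed

lemma contF:
  fixes f :: "real \<Rightarrow> real^2"
  assumes "\<And>a b. f integrable_on {a..b}" "\<And>b. \<exists>M\<ge>0. \<forall>t. 0 \<le> t \<longrightarrow> t \<le> b \<longrightarrow> norm (f t) \<le> M"
  shows "continuous_on UNIV (\<lambda>s. integral {0..s} f)"
proof -
  have "isCont (\<lambda>s. integral {0..s} f) x" for x
  proof -
    obtain M where M: "M \<ge> 0" "\<forall>t. 0 \<le> t \<longrightarrow> t \<le> x + 1 \<longrightarrow> norm (f t) \<le> M"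
      using assms(2) by blast
    have "M-lipschitz_on {..<x+1} (\<lambda>s. integral {0..s} f)"
      unfolding lipschitz_on_def dist_norm dist_real_def
      using lipF[OF assms(1) M(1), of "x+1"] M by auto
    then have "continuous_on {..<x+1} (\<lambda>s. integral {0..s} f)"
      by (rule lipschitz_on_continuous_on)
    then show ?thesis
      by (meson continuous_on_eq_continuous_at open_lessThan lessThan_iff less_add_one)
  qed
  then show ?thesis by (simp add: continuous_at_imp_continuous_on)
qed

definition nice :: "(real^2) set \<Rightarrow> real^2 \<Rightarrow> real^2 \<Rightarrow> (real \<Rightarrow> real^2) \<Rightarrow> (real \<Rightarrow> real^2) \<Rightarrow> (real \<Rightarrow> real^2) \<Rightarrow> bool" where
  "nice \<Omega> x0 y0 u Y X \<longleftrightarrow> u \<in> borel_measurable lebesgue \<and> (\<forall>t. u t \<in> \<Omega>) \<and>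
     (\<forall>t. Y t = y0 + integral {0..t} u) \<and> (\<forall>t. X t = x0 + integral {0..t} Y)"

lemma nice_props:
  assumes n: "nice \<Omega> x0 y0 u Y X" and R: "\<forall>v\<in>\<Omega>. norm v \<le> R"
  shows "\<And>a b. u integrable_on {a..b}" "continuous_on UNIV Y" "\<And>a b. Y integrable_on {a..b}"
    "continuous_on UNIV X" "\<And>s. 0 \<le> s \<Longrightarrow> norm (Y s - y0) \<le> R * s" "0 \<le> R"
proof -
  have um: "u \<in> borel_measurable lebesgue" and uO: "\<And>t. u t \<in> \<Omega>"
    and Yd: "\<And>t. Y t = y0 + integral {0..t} u" and Xd: "\<And>t. X t = x0 + integral {0..t} Y"
    using n unfolding nice_def by auto
  have ub: "\<And>t. norm (u t) \<le> R" using uO R by auto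
  show R0: "0 \<le> R" using ub[of 0] norm_ge_zero order_trans by blast
  show ui: "\<And>a b. u integrable_on {a..b}" by (rule meas_integrable[OF um ub])
  have "continuous_on UNIV (\<lambda>s. integral {0..s} u)"
    by (rule contF[OF ui]) (use ub R0 in blast)
  then show Yc: "continuous_on UNIV Y" unfolding Yd[abs_def] by (intro continuous_intros)
  then show Yi: "\<And>a b. Y integrable_on {a..b}"
    by (meson continuous_on_subset integrable_continuous_real subset_UNIV)
  show Yb: "norm (Y s - y0) \<le> R * s" if "0 \<le> s" for s
    using lipF[OF ui R0, of s s 0] ub that by (simp add: Yd)
  have "continuous_on UNIV (\<lambda>s. integral {0..s} Y)"
  proof (rule contF[OF Yi])
    fix b :: real
    show "\<exists>M\<ge>0. \<forall>t. 0 \<le> t \<longrightarrow> t \<le> b \<longrightarrow> norm (Y t) \<le> M"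
    proof (intro exI[of _ "norm y0 + R * \<bar>b\<bar>"] conjI allI impI)
      show "0 \<le> norm y0 + R * \<bar>b\<bar>" using R0 by simp
      fix t :: real assume t: "0 \<le> t" "t \<le> b"
      have "norm (Y t) \<le> norm y0 + norm (Y t - y0)" by (metis norm_triangle_sub add.commute)
      also have "\<dots> \<le> norm y0 + R * t" using Yb[OF t(1)] by simp
      also have "\<dots> \<le> norm y0 + R * \<bar>b\<bar>" using t R0 by (simp add: mult_left_mono)
      finally show "norm (Y t) \<le> norm y0 + R * \<bar>b\<bar>" .
    qed
  qed
  then show "continuous_on UNIV X" unfolding Xd[abs_def] by (intro continuous_intros)
qed

lemma normalize:
  assumes adm: "admissible \<Omega> x0 y0 x" and O0: "0 \<in> \<Omega>" and cl: "closed \<Omega>"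
  shows "\<exists>u Y X. nice \<Omega> x0 y0 u Y X \<and> (\<forall>t\<ge>0. X t = x t)"
proof -
  obtain y u where um: "u \<in> borel_measurable lebesgue"
    and ae: "AE t in lebesgue. t \<ge> 0 \<longrightarrow> u t \<in> \<Omega>"
    and yd: "\<forall>t\<ge>0. y t = y0 + integral {0..t} u"
    and xd: "\<forall>t\<ge>0. x t = x0 + integral {0..t} y"
    using adm unfolding admissible_def by blast
  define u' where "u' t = (if u t \<in> \<Omega> then u t else 0)" for t
  define Y where "Y t = y0 + integral {0..t} u'" for t
  define X where "X t = x0 + integral {0..t} Y" for t
  have u'm: "u' \<in> borel_measurable lebesgue"
  proof -
    have "\<Omega> \<in> sets borel" using cl by simp
    then have "{t \<in> space lebesgue. u t \<in> \<Omega>} \<in> sets lebesgue"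
      using measurable_sets[OF um, of \<Omega>] by (simp add: vimage_def Int_def)
    then show ?thesis unfolding u'_def[abs_def]
      by (intro measurable_If[where P="\<lambda>t. u t \<in> \<Omega>", OF um]) auto
  qed
  have u'O: "\<forall>t. u' t \<in> \<Omega>" using O0 by (simp add: u'_def)
  obtain N where N: "N \<in> null_sets lebesgue" "\<And>t. t \<in> space lebesgue - N \<Longrightarrow> t \<ge> 0 \<longrightarrow> u t \<in> \<Omega>"
    using ae by (rule AE_E3) blast
  have negN: "negligible N" using N(1) by (simp add: negligible_iff_null_sets)
  have Yy: "Y t = y t" if "t \<ge> 0" for t
  proof -
    have "integral {0..t} u' = integral {0..t} u"
      by (rule integral_spike[OF negN]) (use N(2) in \<open>auto simp: u'_def\<close>)
    then show ?thesis using yd that by (simp add: Y_def)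
  qed
  have Xx: "X t = x t" if "t \<ge> 0" for t
  proof -
    have "integral {0..t} Y = integral {0..t} y"
      by (rule integral_cong) (use Yy in auto)
    then show ?thesis using xd that by (simp add: X_def)
  qed
  show ?thesis
    by (rule exI[of _ u'], rule exI[of _ Y], rule exI[of _ X])
       (use u'm u'O Xx in \<open>auto simp: nice_def Y_def X_def\<close>)
qed

lemma gap_geom:
  fixes d0 e0 :: "real^2"
  assumes "(d0, e0) \<noteq> (0, 0)" "0 \<le> K"
  shows "\<exists>h c. 0 < h \<and> h \<le> 1 \<and> 0 < c \<and>
     (\<forall>v s. h/2 \<le> s \<and> s \<le> h \<and> norm (v - d0 - s *\<^sub>R e0) \<le> K * s^2 \<longrightarrow> c \<le> norm v)"
proof (cases "d0 = 0")
  case False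
  define h where "h = min 1 (norm d0 / (2 * (norm e0 + K + 1)))"
  have nd: "norm d0 > 0" using False by simp
  have "0 < 2 * (norm e0 + K + 1)" using assms(2) by (simp add: add_nonneg_pos)
  then have h0: "0 < h" "h \<le> 1" using nd unfolding h_def by (simp_all add: divide_pos_pos)
  have hb: "h * (norm e0 + K) \<le> norm d0 / 2"
  proof -
    have "h * (norm e0 + K) \<le> h * (norm e0 + K + 1)" using h0 by simp
    also have "\<dots> \<le> norm d0 / (2 * (norm e0 + K + 1)) * (norm e0 + K + 1)"
      using assms(2) by (intro mult_right_mono) (auto simp: h_def)
    also have "\<dots> = norm d0 / 2" using assms(2)
      by (simp add: field_simps add_nonneg_eq_0_iff)
    finally show ?thesis .
  qed
  have main: "norm d0 / 2 \<le> norm v" if a: "h/2 \<le> s \<and> s \<le> h \<and> norm (v - d0 - s *\<^sub>R e0) \<le> K * s^2" for v s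
  proof -
    have s0: "0 \<le> s" "s \<le> 1" using a h0 by auto
    have "s^2 \<le> s" using s0 by (simp add: power2_eq_square mult_left_le_one_le)
    then have Ks: "K * s^2 \<le> K * s" using assms(2) by (simp add: mult_left_mono)
    have "d0 = (v - (v - d0 - s *\<^sub>R e0)) - s *\<^sub>R e0" by simp
    then have "norm d0 \<le> norm (v - (v - d0 - s *\<^sub>R e0)) + norm (s *\<^sub>R e0)"
      by (metis norm_triangle_ineq4)
    also have "\<dots> \<le> norm v + norm (v - d0 - s *\<^sub>R e0) + norm (s *\<^sub>R e0)"
      using norm_triangle_ineq4[of v "v - d0 - s *\<^sub>R e0"] by simp
    also have "\<dots> \<le> norm v + K * s + s * norm e0" using a Ks s0 by simp
    also have "\<dots> \<le> norm v + h * (norm e0 + K)"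
      using mult_right_mono[of s h "norm e0 + K"] a assms(2) by (simp add: algebra_simps)
    finally show "norm d0 / 2 \<le> norm v" using hb by simp
  qed
  show ?thesis
    by (rule exI[of _ h], rule exI[of _ "norm d0 / 2"]) (use h0 nd main in auto)
next
  case True
  then have e: "e0 \<noteq> 0" using assms(1) by simp
  have ne: "norm e0 > 0" using e by simp
  define h where "h = min 1 (norm e0 / (2 * K + 2))"
  have h0: "0 < h" "h \<le> 1" using ne assms(2) by (auto simp: h_def)
  have hb: "K * h \<le> norm e0 / 2"
  proof -
    have "K * h \<le> K * (norm e0 / (2 * K + 2))" using assms(2) by (intro mult_left_mono) (auto simp: h_def)
    also have "\<dots> \<le> norm e0 / 2" using assms(2) ne by (simp add: field_simps)
    finally show ?thesis .
  qed
  have main: "h * norm e0 / 4 \<le> norm v" if a: "h/2 \<le> s \<and> s \<le> h \<and> norm (v - d0 - s *\<^sub>R e0) \<le> K * s^2" for v s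
  proof -
    have s0: "0 \<le> s" using a h0 by auto
    have "s * norm e0 = norm (s *\<^sub>R e0)" using s0 by simp
    also have "\<dots> \<le> norm v + norm (v - s *\<^sub>R e0)"
      by (metis add.commute norm_triangle_sub norm_minus_commute)
    also have "\<dots> \<le> norm v + K * s^2" using a True by simp
    also have "K * s^2 = s * (K * s)" by (simp add: power2_eq_square)
    also have "s * (K * s) \<le> s * (norm e0 / 2)"
    proof -
      have "K * s \<le> K * h" using a assms(2) by (simp add: mult_left_mono)
      then show ?thesis using hb s0 by (intro mult_left_mono) auto
    qed
    finally have "s * norm e0 / 2 \<le> norm v" by simp
    moreover have "h * norm e0 / 4 \<le> s * norm e0 / 2"
      using a ne by (simp add: field_simps)
    ultimately show "h * norm e0 / 4 \<le> norm v" by simp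
  qed
  show ?thesis
    by (rule exI[of _ h], rule exI[of _ "h * norm e0 / 4"]) (use h0 ne main in auto)
qed

lemma gap:
  fixes d0 e0 :: "real^2"
  assumes "(d0, e0) \<noteq> (0, 0)" "0 \<le> K"
  shows "\<exists>\<gamma>>0. \<forall>d. (\<forall>s\<in>{0..1}. norm (d s - d0 - s *\<^sub>R e0) \<le> K * s^2) \<longrightarrow> ennreal \<gamma> \<le> cost d"
proof -
  obtain h c where hc: "0 < h" "h \<le> 1" "0 < c"
    "\<And>v s. h/2 \<le> s \<Longrightarrow> s \<le> h \<Longrightarrow> norm (v - d0 - s *\<^sub>R e0) \<le> K * s^2 \<Longrightarrow> c \<le> norm v"
    using gap_geom[OF assms] by blast
  show ?thesis
  proof (intro exI[of _ "c^2/2 * (h/2)"] conjI allI impI)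
    show "0 < c^2/2 * (h/2)" using hc by simp
    fix d :: "real \<Rightarrow> real^2"
    assume d: "\<forall>s\<in>{0..1}. norm (d s - d0 - s *\<^sub>R e0) \<le> K * s^2"
    have "ennreal (c^2/2 * (h/2)) = ennreal (c^2/2) * ennreal (h/2)"
      by (rule ennreal_mult) (use hc in auto)
    also have "\<dots> = (\<integral>\<^sup>+ s. ennreal (c^2/2) * indicator {h/2..h} s \<partial>lborel)"
      using hc by (simp add: nn_integral_cmult_indicator)
    also have "\<dots> \<le> cost d" unfolding cost_def
    proof (rule nn_integral_mono)
      fix s :: real
      show "ennreal (c^2/2) * indicator {h/2..h} s \<le> indicator {0..} s * ennreal ((d s \<bullet> d s) / 2)"
      proof (cases "s \<in> {h/2..h}")
        case True
        have "c \<le> norm (d s)" using hc(4)[of s "d s"] True d hc by auto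
        then have "c^2 \<le> (norm (d s))^2" using hc by (intro power_mono) auto
        then have "c^2/2 \<le> (d s \<bullet> d s)/2" by (simp add: power2_norm_eq_inner)
        moreover have "s \<ge> 0" using True hc by auto
        ultimately show ?thesis using True by (simp add: ennreal_leI)
      qed simp
    qed
    finally show "ennreal (c^2/2 * (h/2)) \<le> cost d" .
  qed
qed

lemma pw_ftc:
  fixes F f :: "real \<Rightarrow> real^2"
  assumes d: "\<And>\<sigma>. (F has_vector_derivative f \<sigma>) (at \<sigma>)" and FT: "F T = 0" and T: "0 \<le> T" and t: "0 \<le> t"
  shows "(if t \<le> T then F t else 0) = F 0 + integral {0..t} (\<lambda>\<sigma>. if \<sigma> \<le> T then f \<sigma> else 0)"
proof -
  have ftc: "integral {0..a} f = F a - F 0" if "0 \<le> a" for a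
    using fundamental_theorem_of_calculus[OF that, of F f] d
    by (simp add: has_vector_derivative_at_within integral_unique)
  have eq: "integral {0..a} (\<lambda>\<sigma>. if \<sigma> \<le> T then f \<sigma> else 0) = integral {0..a} f" if "a \<le> T" for a
    by (rule integral_cong) (use that in auto)
  show ?thesis
  proof (cases "t \<le> T")
    case True
    then show ?thesis using eq[OF True] ftc[OF t] by simp
  next
    case False
    have fi: "f integrable_on {0..T}"
      using fundamental_theorem_of_calculus[OF T, of F f] d
      by (simp add: has_vector_derivative_at_within has_integral_integrable)
    have z: "integral {T..t} (\<lambda>\<sigma>. if \<sigma> \<le> T then f \<sigma> else 0) = 0"
    proof -
      have "integral {T..t} (\<lambda>\<sigma>. if \<sigma> \<le> T then f \<sigma> else 0) = integral {T..t} (\<lambda>_. 0::real^2)"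
        by (rule integral_spike[of "{T}"]) auto
      then show ?thesis by simp
    qed
    have i1: "(\<lambda>\<sigma>. if \<sigma> \<le> T then f \<sigma> else 0) integrable_on {0..T}"
      using fi integrable_cong[of "{0..T}" "\<lambda>\<sigma>. if \<sigma> \<le> T then f \<sigma> else 0" f] by simp
    have i2: "(\<lambda>\<sigma>. if \<sigma> \<le> T then f \<sigma> else 0) integrable_on {T..t}"
    proof -
      have "(\<lambda>_. 0::real^2) integrable_on {T..t}" by (rule integrable_0)
      then show ?thesis by (rule integrable_spike[where S="{T}"]) auto
    qed
    have "integral {0..T} (\<lambda>\<sigma>. if \<sigma> \<le> T then f \<sigma> else 0) + integral {T..t} (\<lambda>\<sigma>. if \<sigma> \<le> T then f \<sigma> else 0)
        = integral {0..t} (\<lambda>\<sigma>. if \<sigma> \<le> T then f \<sigma> else 0)"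
      by (rule Henstock_Kurzweil_Integration.integral_combine) (use T False Henstock_Kurzweil_Integration.integrable_combine[OF _ _ i1 i2] in simp_all)
    then show ?thesis using False z eq[of T] ftc[OF T] FT by (simp add: neg_eq_iff_add_eq_0)
  qed
qed

lemma vd2:
  fixes x0 y0 :: "real^2"
  assumes "(a has_real_derivative a') (at t)" "(b has_real_derivative b') (at t)"
  shows "((\<lambda>t. a t *\<^sub>R x0 + b t *\<^sub>R y0) has_vector_derivative (a' *\<^sub>R x0 + b' *\<^sub>R y0)) (at t)"
  using has_vector_derivative_scaleR[OF assms(1), of "\<lambda>_. x0" 0]
        has_vector_derivative_scaleR[OF assms(2), of "\<lambda>_. y0" 0] assms
  by (auto intro!: derivative_eq_intros)

lemma test_deriv:
  fixes T :: real
  assumes "T \<noteq> 0"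
  shows "((\<lambda>t. 1 - 3*t^2/T^2 + 2*t^3/T^3) has_real_derivative (-6*t/T^2 + 6*t^2/T^3)) (at t)"
    "((\<lambda>t. t - 2*t^2/T + t^3/T^2) has_real_derivative (1 - 4*t/T + 3*t^2/T^2)) (at t)"
    "((\<lambda>t. -6*t/T^2 + 6*t^2/T^3) has_real_derivative (-6/T^2 + 12*t/T^3)) (at t)"
    "((\<lambda>t. 1 - 4*t/T + 3*t^2/T^2) has_real_derivative (-4/T + 6*t/T^2)) (at t)"
  using assms by (auto intro!: derivative_eq_intros simp: field_simps power2_eq_square power3_eq_cube)

lemma meas_cut:
  fixes f :: "real \<Rightarrow> real^2"
  assumes c: "continuous_on UNIV f"
  shows "(\<lambda>t. if t \<le> T then f t else 0) \<in> borel_measurable lebesgue"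
proof -
  have "(\<lambda>t. indicator {..T} t *\<^sub>R f t) \<in> borel_measurable borel"
    by (rule borel_measurable_continuous_on_indicator) (use c continuous_on_subset in auto)
  then have "(\<lambda>t. indicator {..T} t *\<^sub>R f t) \<in> borel_measurable lebesgue"
    by (intro measurable_completion) simp
  moreover have "(\<lambda>t. indicator {..T} t *\<^sub>R f t) = (\<lambda>t. if t \<le> T then f t else 0)"
    by (auto simp: indicator_def)
  ultimately show ?thesis by simp
qed

lemma a1: fixes T t :: real assumes "T > 0" shows "-6/T^2 + 12*t/T^3 = (6/T^2) * (2 * (t/T) - 1)"
  using assms by (simp add: field_simps power2_eq_square power3_eq_cube)
lemma a2: fixes T t :: real assumes "T > 0" shows "-4/T + 6*t/T^2 = (2/T) * (3 * (t/T) - 2)"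
  using assms by (simp add: field_simps power2_eq_square)
lemma a3: fixes T z :: real assumes "T \<ge> 1" "\<bar>z\<bar> \<le> 1" shows "\<bar>(6/T^2) * z\<bar> \<le> 6/T"
proof -
  have "\<bar>(6/T^2) * z\<bar> = (6/T^2) * \<bar>z\<bar>" by (simp add: abs_mult)
  also have "\<dots> \<le> 6/T^2 * 1" using assms by (intro mult_left_mono) auto
  also have "\<dots> \<le> 6/T" using assms by (simp add: field_simps power2_eq_square)
  finally show ?thesis .
qed
lemma a4: fixes T z :: real assumes "T > 0" "\<bar>z\<bar> \<le> 2" shows "\<bar>(2/T) * z\<bar> \<le> 4/T"
proof -
  have "\<bar>(2/T) * z\<bar> = (2/T) * \<bar>z\<bar>" using assms by (simp add: abs_mult)
  also have "\<dots> \<le> 2/T * 2" using assms by (intro mult_left_mono) auto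
  finally show ?thesis by simp
qed

lemma bellman_finite:
  assumes "0 \<in> interior \<Omega>"
  shows "bellman \<Omega> (x0, y0) < top"
proof -
  obtain r where r: "r > 0" "cball 0 r \<subseteq> \<Omega>" using assms mem_interior_cball by blast
  define T where "T = 1 + (6 * norm x0 + 4 * norm y0) / r"
  have T1: "T \<ge> 1" using r by (simp add: T_def)
  then have T0: "T > 0" "T \<noteq> 0" by auto
  have rT: "6 * norm x0 + 4 * norm y0 \<le> r * T" using r by (simp add: T_def field_simps)
  define P where "P t = (1 - 3*t^2/T^2 + 2*t^3/T^3) *\<^sub>R x0 + (t - 2*t^2/T + t^3/T^2) *\<^sub>R y0" for t
  define P1 where "P1 t = (-6*t/T^2 + 6*t^2/T^3) *\<^sub>R x0 + (1 - 4*t/T + 3*t^2/T^2) *\<^sub>R y0" for t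
  define P2 where "P2 t = (-6/T^2 + 12*t/T^3) *\<^sub>R x0 + (-4/T + 6*t/T^2) *\<^sub>R y0" for t
  have dP: "\<And>t. (P has_vector_derivative P1 t) (at t)"
    unfolding P_def[abs_def] P1_def by (intro vd2 test_deriv T0)
  have dP1: "\<And>t. (P1 has_vector_derivative P2 t) (at t)"
    unfolding P1_def[abs_def] P2_def by (intro vd2 test_deriv T0)
  have PT: "P T = 0" "P1 T = 0" using T0
    by (simp_all add: P_def P1_def field_simps power2_eq_square power3_eq_cube)
  have P0: "P 0 = x0" "P1 0 = y0" by (simp_all add: P_def P1_def)
  have cP2: "continuous_on UNIV P2" unfolding P2_def by (intro continuous_intros) (use T0 in auto)
  have cP: "continuous_on UNIV P" unfolding P_def by (intro continuous_intros) (use T0 in auto)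
  define x where "x t = (if t \<le> T then P t else 0)" for t
  define y where "y t = (if t \<le> T then P1 t else 0)" for t
  define u where "u t = (if t \<le> T then P2 t else 0)" for t
  have ubound: "norm (P2 t) \<le> r" if "0 \<le> t" "t \<le> T" for t
  proof -
    have q: "0 \<le> t / T" "t / T \<le> 1" using that T0 by auto
    have a: "\<bar>-6/T^2 + 12*t/T^3\<bar> \<le> 6 / T"
    proof -
      have z: "\<bar>2 * (t/T) - 1\<bar> \<le> 1" using q by auto
      show ?thesis unfolding a1[OF T0(1)] by (rule a3[OF T1 z])
    qed
    have b: "\<bar>-4/T + 6*t/T^2\<bar> \<le> 4 / T"
    proof -
      have z: "\<bar>3 * (t/T) - 2\<bar> \<le> 2" using q by auto
      show ?thesis unfolding a2[OF T0(1)] by (rule a4[OF T0(1) z])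
    qed
    have "norm (P2 t) \<le> \<bar>-6/T^2 + 12*t/T^3\<bar> * norm x0 + \<bar>-4/T + 6*t/T^2\<bar> * norm y0"
      unfolding P2_def by (rule order_trans[OF norm_triangle_ineq]) simp
    also have "\<dots> \<le> 6 / T * norm x0 + 4 / T * norm y0"
      using a b by (intro add_mono mult_right_mono) auto
    also have "\<dots> = (6 * norm x0 + 4 * norm y0) / T" by (simp add: add_divide_distrib)
    also have "\<dots> \<le> r" using rT T0 by (simp add: divide_le_eq)
    finally show ?thesis .
  qed
  have adm: "admissible \<Omega> x0 y0 x"
    unfolding admissible_def
  proof (rule exI[of _ y], rule exI[of _ u], intro conjI allI impI)
    show "u \<in> borel_measurable lebesgue" unfolding u_def[abs_def] by (rule meas_cut[OF cP2])
    show "AE t in lebesgue. 0 \<le> t \<longrightarrow> u t \<in> \<Omega>"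
    proof (rule AE_I2, intro impI)
      fix t :: real assume "0 \<le> t"
      then show "u t \<in> \<Omega>" using ubound[of t] r(2) r(1) by (auto simp: u_def)
    qed
    fix t :: real assume t: "0 \<le> t"
    show "y t = y0 + integral {0..t} u"
      using pw_ftc[OF dP1 PT(2) _ t] T0 P0 by (simp add: y_def u_def[abs_def])
    show "x t = x0 + integral {0..t} y"
      using pw_ftc[OF dP PT(1) _ t] T0 P0 by (simp add: x_def y_def[abs_def])
  qed
  obtain M where M: "\<And>t. t \<in> {0..T} \<Longrightarrow> norm (P t) \<le> M"
    using compact_imp_bounded[OF compact_continuous_image[OF continuous_on_subset[OF cP] compact_Icc]]
    unfolding bounded_iff by blast
  have "cost x \<le> (\<integral>\<^sup>+ t. ennreal (M^2/2) * indicator {0..T} t \<partial>lborel)"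
    unfolding cost_def
  proof (rule nn_integral_mono)
    fix t :: real
    show "indicator {0..} t * ennreal ((x t \<bullet> x t) / 2) \<le> ennreal (M^2/2) * indicator {0..T} t"
    proof (cases "t \<in> {0..T}")
      case True
      have "norm (P t) \<le> M" using M True by auto
      then have "(norm (P t))^2 \<le> M^2" by (intro power_mono) auto
      then have "(P t \<bullet> P t) / 2 \<le> M^2/2" by (simp add: power2_norm_eq_inner)
      then show ?thesis using True by (simp add: x_def ennreal_leI)
    next
      case False
      then show ?thesis by (auto simp: x_def)
    qed
  qed
  also have "\<dots> = ennreal (M^2/2) * ennreal T" using T0 by (simp add: nn_integral_cmult_indicator)
  also have "\<dots> < top" by (simp add: ennreal_mult_less_top)
  finally have "cost x < top" .
  moreover have "bellman \<Omega> (x0, y0) \<le> cost x"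
    unfolding bellman_def using adm by (intro INF_lower) simp
  ultimately show ?thesis by simp
qed

lemma pt:
  fixes a b :: "real^2"
  shows "(t *\<^sub>R a + (1-t) *\<^sub>R b) \<bullet> (t *\<^sub>R a + (1-t) *\<^sub>R b) / 2 + t*(1-t) * ((a-b) \<bullet> (a-b) / 2) = t * (a \<bullet> a / 2) + (1-t) * (b \<bullet> b / 2)"
proof -
  have e: "(t *\<^sub>R a + (1-t) *\<^sub>R b) \<bullet> (t *\<^sub>R a + (1-t) *\<^sub>R b) = t*t*(a\<bullet>a) + 2*t*(1-t)*(a\<bullet>b) + (1-t)*(1-t)*(b\<bullet>b)"
    by (simp add: inner_add_left inner_add_right inner_commute algebra_simps)
  have f: "(a-b) \<bullet> (a-b) = a\<bullet>a - 2*(a\<bullet>b) + b\<bullet>b"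
    by (simp add: inner_diff_left inner_diff_right inner_commute algebra_simps)
  show ?thesis unfolding e f by (simp add: field_simps)
qed

lemma mfun:
  fixes g :: "real \<Rightarrow> real"
  assumes "continuous_on UNIV g"
  shows "(\<lambda>s. indicator {0..} s * ennreal (g s)) \<in> borel_measurable lborel"
proof -
  have [measurable]: "g \<in> borel_measurable borel" by (rule borel_measurable_continuous_onI[OF assms])
  show ?thesis by measurable
qed

lemma cost_identity:
  fixes X1 X2 :: "real \<Rightarrow> real^2"
  assumes c1: "continuous_on UNIV X1" and c2: "continuous_on UNIV X2" and t: "0 \<le> t" "t \<le> 1"
  shows "cost (\<lambda>s. t *\<^sub>R X1 s + (1-t) *\<^sub>R X2 s) + ennreal (t*(1-t)) * cost (\<lambda>s. X1 s - X2 s)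
       = ennreal t * cost X1 + ennreal (1-t) * cost X2"
proof -
  define W where "W s = t *\<^sub>R X1 s + (1-t) *\<^sub>R X2 s" for s
  define D where "D s = X1 s - X2 s" for s
  have cW: "continuous_on UNIV W" unfolding W_def[abs_def] using c1 c2 by (intro continuous_intros)
  have cD: "continuous_on UNIV D" unfolding D_def[abs_def] using c1 c2 by (intro continuous_intros)
  let ?f = "\<lambda>Z s. indicator {0..} s * ennreal ((Z s \<bullet> Z s) / 2)"
  have m: "?f Z \<in> borel_measurable lborel" if "continuous_on UNIV Z" for Z :: "real \<Rightarrow> real^2"
    by (rule mfun) (use that in \<open>intro continuous_intros, auto\<close>)
  have "cost W + ennreal (t*(1-t)) * cost D = integral\<^sup>N lborel (?f W) + (\<integral>\<^sup>+ s. ennreal (t*(1-t)) * ?f D s \<partial>lborel)"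
    unfolding cost_def by (simp add: nn_integral_cmult[OF m[OF cD]])
  also have "\<dots> = (\<integral>\<^sup>+ s. ?f W s + ennreal (t*(1-t)) * ?f D s \<partial>lborel)"
    by (rule nn_integral_add[symmetric]) (use m[OF cW] m[OF cD] in auto)
  also have "\<dots> = (\<integral>\<^sup>+ s. ennreal t * ?f X1 s + ennreal (1-t) * ?f X2 s \<partial>lborel)"
  proof (rule nn_integral_cong)
    fix s :: real
    have nn: "0 \<le> (Z s \<bullet> Z s) / 2" for Z :: "real \<Rightarrow> real^2" by simp
    have t1: "0 \<le> 1 - t" "0 \<le> t*(1-t)" using t by auto
    have "ennreal ((W s \<bullet> W s) / 2) + ennreal (t*(1-t)) * ennreal ((D s \<bullet> D s) / 2)
        = ennreal ((W s \<bullet> W s) / 2) + ennreal (t*(1-t) * ((D s \<bullet> D s) / 2))"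
      by (subst ennreal_mult[OF t1(2) nn]) (rule refl)
    also have "\<dots> = ennreal ((W s \<bullet> W s) / 2 + t*(1-t) * ((D s \<bullet> D s) / 2))"
      by (rule ennreal_plus[symmetric]) (use nn t1 in auto)
    also have "\<dots> = ennreal (t * ((X1 s \<bullet> X1 s) / 2) + (1-t) * ((X2 s \<bullet> X2 s) / 2))"
      unfolding W_def D_def by (simp only: pt)
    also have "\<dots> = ennreal (t * ((X1 s \<bullet> X1 s) / 2)) + ennreal ((1-t) * ((X2 s \<bullet> X2 s) / 2))"
      by (rule ennreal_plus) (use nn t t1 in auto)
    also have "\<dots> = ennreal t * ennreal ((X1 s \<bullet> X1 s) / 2) + ennreal (1-t) * ennreal ((X2 s \<bullet> X2 s) / 2)"
      by (simp only: ennreal_mult[OF t(1) nn] ennreal_mult[OF t1(1) nn])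
    finally have eq: "ennreal ((W s \<bullet> W s) / 2) + ennreal (t*(1-t)) * ennreal ((D s \<bullet> D s) / 2) =
      ennreal t * ennreal ((X1 s \<bullet> X1 s) / 2) + ennreal (1-t) * ennreal ((X2 s \<bullet> X2 s) / 2)" .
    show "?f W s + ennreal (t*(1-t)) * ?f D s = ennreal t * ?f X1 s + ennreal (1-t) * ?f X2 s"
    proof (cases "s \<in> {0..}")
      case True then show ?thesis using eq by simp
    next
      case False then show ?thesis by simp
    qed
  qed
  also have "\<dots> = (\<integral>\<^sup>+ s. ennreal t * ?f X1 s \<partial>lborel) + (\<integral>\<^sup>+ s. ennreal (1-t) * ?f X2 s \<partial>lborel)"
    by (rule nn_integral_add) (use m[OF c1] m[OF c2] in auto)
  also have "\<dots> = ennreal t * cost X1 + ennreal (1-t) * cost X2"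
    unfolding cost_def by (simp add: nn_integral_cmult[OF m[OF c1]] nn_integral_cmult[OF m[OF c2]])
  finally show ?thesis unfolding W_def D_def .
qed

lemma cost_cong:
  assumes "\<And>s. 0 \<le> s \<Longrightarrow> X s = x s"
  shows "cost X = cost x"
  unfolding cost_def by (rule nn_integral_cong) (use assms in \<open>auto simp: indicator_def\<close>)

lemma int_lin:
  fixes f g :: "real \<Rightarrow> real^2"
  assumes "f integrable_on S" "g integrable_on S"
  shows "integral S (\<lambda>x. a *\<^sub>R f x + b *\<^sub>R g x) = a *\<^sub>R integral S f + b *\<^sub>R integral S g"
  using assms by (simp add: integral_add integrable_cmul)

lemma mix_adm:
  assumes n1: "nice \<Omega> a0 b0 u1 Y1 X1" and n2: "nice \<Omega> a1 b1 u2 Y2 X2"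
    and R: "\<forall>v\<in>\<Omega>. norm v \<le> R" and conv: "convex \<Omega>" and t: "0 \<le> t" "t \<le> 1"
  shows "admissible \<Omega> (t *\<^sub>R a0 + (1-t) *\<^sub>R a1) (t *\<^sub>R b0 + (1-t) *\<^sub>R b1) (\<lambda>s. t *\<^sub>R X1 s + (1-t) *\<^sub>R X2 s)"
proof -
  note p1 = nice_props[OF n1 R] and p2 = nice_props[OF n2 R]
  have um1: "u1 \<in> borel_measurable lebesgue" and uO1: "\<And>s. u1 s \<in> \<Omega>"
    and Yd1: "\<And>s. Y1 s = b0 + integral {0..s} u1" and Xd1: "\<And>s. X1 s = a0 + integral {0..s} Y1"
    using n1 unfolding nice_def by auto
  have um2: "u2 \<in> borel_measurable lebesgue" and uO2: "\<And>s. u2 s \<in> \<Omega>"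
    and Yd2: "\<And>s. Y2 s = b1 + integral {0..s} u2" and Xd2: "\<And>s. X2 s = a1 + integral {0..s} Y2"
    using n2 unfolding nice_def by auto
  show ?thesis
    unfolding admissible_def
  proof (rule exI[of _ "\<lambda>s. t *\<^sub>R Y1 s + (1-t) *\<^sub>R Y2 s"], rule exI[of _ "\<lambda>s. t *\<^sub>R u1 s + (1-t) *\<^sub>R u2 s"], intro conjI allI impI)
    show "(\<lambda>s. t *\<^sub>R u1 s + (1-t) *\<^sub>R u2 s) \<in> borel_measurable lebesgue"
      using um1 um2 by measurable
    show "AE s in lebesgue. 0 \<le> s \<longrightarrow> t *\<^sub>R u1 s + (1-t) *\<^sub>R u2 s \<in> \<Omega>"
      by (rule AE_I2) (use t uO1 uO2 conv in \<open>auto intro!: convexD\<close>)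
    fix s :: real assume "0 \<le> s"
    show "t *\<^sub>R Y1 s + (1-t) *\<^sub>R Y2 s = t *\<^sub>R b0 + (1-t) *\<^sub>R b1 + integral {0..s} (\<lambda>s. t *\<^sub>R u1 s + (1-t) *\<^sub>R u2 s)"
      unfolding int_lin[OF p1(1) p2(1)] Yd1 Yd2 by (simp add: algebra_simps)
    show "t *\<^sub>R X1 s + (1-t) *\<^sub>R X2 s = t *\<^sub>R a0 + (1-t) *\<^sub>R a1 + integral {0..s} (\<lambda>s. t *\<^sub>R Y1 s + (1-t) *\<^sub>R Y2 s)"
      unfolding int_lin[OF p1(3) p2(3)] Xd1 Xd2 by (simp add: algebra_simps)
  qed
qed

lemma gap_cond:
  assumes n1: "nice \<Omega> a0 b0 u1 Y1 X1" and n2: "nice \<Omega> a1 b1 u2 Y2 X2"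
    and R: "\<forall>v\<in>\<Omega>. norm v \<le> R" and s: "0 \<le> s"
  shows "norm ((X1 s - X2 s) - (a0 - a1) - s *\<^sub>R (b0 - b1)) \<le> 2 * R * s^2"
proof -
  note p1 = nice_props[OF n1 R] and p2 = nice_props[OF n2 R]
  have Xd1: "\<And>s. X1 s = a0 + integral {0..s} Y1" using n1 unfolding nice_def by auto
  have Xd2: "\<And>s. X2 s = a1 + integral {0..s} Y2" using n2 unfolding nice_def by auto
  define e0 where "e0 = b0 - b1"
  have c: "continuous_on {0..s} (\<lambda>\<sigma>. Y1 \<sigma> - Y2 \<sigma> - e0)"
    using p1(2) p2(2) by (intro continuous_intros) (auto intro: continuous_on_subset)
  have "integral {0..s} (\<lambda>\<sigma>. Y1 \<sigma> - Y2 \<sigma> - e0) = integral {0..s} Y1 - integral {0..s} Y2 - s *\<^sub>R e0"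
  proof -
    have i12: "(\<lambda>\<sigma>. Y1 \<sigma> - Y2 \<sigma>) integrable_on {0..s}" by (rule integrable_diff[OF p1(3) p2(3)])
    have ic: "(\<lambda>\<sigma>. e0) integrable_on {0..s}" by (rule integrable_continuous_real) (rule continuous_on_const)
    have "integral {0..s} (\<lambda>\<sigma>. Y1 \<sigma> - Y2 \<sigma> - e0) = integral {0..s} (\<lambda>\<sigma>. Y1 \<sigma> - Y2 \<sigma>) - integral {0..s} (\<lambda>\<sigma>. e0)"
      by (rule integral_diff[OF i12 ic])
    also have "integral {0..s} (\<lambda>\<sigma>. Y1 \<sigma> - Y2 \<sigma>) = integral {0..s} Y1 - integral {0..s} Y2"
      by (rule integral_diff[OF p1(3) p2(3)])
    also have "integral {0..s} (\<lambda>\<sigma>. e0) = s *\<^sub>R e0" using s by simp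
    finally show ?thesis .
  qed
  then have eq: "(X1 s - X2 s) - (a0 - a1) - s *\<^sub>R (b0 - b1) = integral {0..s} (\<lambda>\<sigma>. Y1 \<sigma> - Y2 \<sigma> - e0)"
    by (simp add: Xd1 Xd2 e0_def algebra_simps)
  have bnd: "norm (Y1 \<sigma> - Y2 \<sigma> - e0) \<le> 2 * R * s" if "\<sigma> \<in> {0..s}" for \<sigma>
  proof -
    have "Y1 \<sigma> - Y2 \<sigma> - e0 = (Y1 \<sigma> - b0) - (Y2 \<sigma> - b1)" by (simp add: e0_def)
    then have "norm (Y1 \<sigma> - Y2 \<sigma> - e0) \<le> norm (Y1 \<sigma> - b0) + norm (Y2 \<sigma> - b1)"
      by (metis norm_triangle_ineq4)
    also have "\<dots> \<le> R * \<sigma> + R * \<sigma>" using p1(5) p2(5) that by (intro add_mono) auto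
    also have "\<dots> \<le> 2 * R * s" using that p1(6) by (simp add: mult_left_mono)
    finally show ?thesis .
  qed
  have "norm (integral {0..s} (\<lambda>\<sigma>. Y1 \<sigma> - Y2 \<sigma> - e0)) \<le> 2 * R * s * (s - 0)"
    by (rule int_bound[OF integrable_continuous_real[OF c] s]) (use bnd s p1(6) in auto)
  then show ?thesis unfolding eq by (simp add: power2_eq_square mult.assoc)
qed

lemma pick:
  assumes "bellman \<Omega> (x0, y0) = ennreal a" "0 < e" "0 \<le> a"
  shows "\<exists>x. admissible \<Omega> x0 y0 x \<and> cost x < ennreal (a + e)"
proof -
  have "bellman \<Omega> (x0, y0) < ennreal (a + e)"
    using assms by (auto simp: ennreal_less_iff)
  then show ?thesis unfolding bellman_def by (auto simp: INF_less_iff)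
qed

lemma enn_lin:
  assumes "0 \<le> t" "0 \<le> s" "0 \<le> x" "0 \<le> y"
  shows "ennreal t * ennreal x + ennreal s * ennreal y = ennreal (t*x + s*y)"
proof -
  have "ennreal (t*x + s*y) = ennreal (t*x) + ennreal (s*y)" by (rule ennreal_plus) (use assms in auto)
  also have "\<dots> = ennreal t * ennreal x + ennreal s * ennreal y"
    by (simp only: ennreal_mult[OF assms(1,3)] ennreal_mult[OF assms(2,4)])
  finally show ?thesis by (rule sym)
qed

lemma enn_lin2:
  assumes "0 \<le> w" "0 \<le> c" "0 \<le> d"
  shows "ennreal w + ennreal c * ennreal d = ennreal (w + c*d)"
  using enn_lin[of 1 c w d] assms by simp

theorem lemma2:
  fixes \<Omega> :: "(real^2) set"
  assumes "convex \<Omega>" and "compact \<Omega>" and "0 \<in> interior \<Omega>"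
  shows "strictly_convex_enn (bellman \<Omega>)"
proof -
  have cl: "closed \<Omega>" using assms(2) by (rule compact_imp_closed)
  have O0: "0 \<in> \<Omega>" using assms(3) interior_subset by blast
  obtain R where R: "\<forall>v\<in>\<Omega>. norm v \<le> R"
    using compact_imp_bounded[OF assms(2)] unfolding bounded_iff by blast
  have R0: "0 \<le> R" using R O0 by force
  show ?thesis unfolding strictly_convex_enn_def
  proof (intro allI impI)
    fix p q :: "(real^2) \<times> (real^2)" and t :: real
    assume pq: "p \<noteq> q" and t0: "0 < t" and t1: "t < 1"
    obtain x0 y0 where p: "p = (x0, y0)" by (cases p)
    obtain x1 y1 where q: "q = (x1, y1)" by (cases q)
    have ne: "(x0 - x1, y0 - y1) \<noteq> (0, 0)" using pq p q by auto
    obtain \<gamma> where g0: "\<gamma> > 0" and gap1: "\<And>d. (\<forall>s\<in>{0..1}. norm (d s - (x0 - x1) - s *\<^sub>R (y0 - y1)) \<le> (2*R) * s^2) \<Longrightarrow> ennreal \<gamma> \<le> cost d"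
      using gap[OF ne, of "2*R"] R0 by auto
    obtain a where a0: "0 \<le> a" and a: "bellman \<Omega> (x0, y0) = ennreal a"
      using bellman_finite[OF assms(3), of x0 y0] by (cases "bellman \<Omega> (x0, y0)" rule: ennreal_cases) auto
    obtain b where b0: "0 \<le> b" and b: "bellman \<Omega> (x1, y1) = ennreal b"
      using bellman_finite[OF assms(3), of x1 y1] by (cases "bellman \<Omega> (x1, y1)" rule: ennreal_cases) auto
    define \<epsilon> where "\<epsilon> = t * (1 - t) * \<gamma> / 2"
    have e0: "\<epsilon> > 0" using t0 t1 g0 by (simp add: \<epsilon>_def)
    obtain x where xa: "admissible \<Omega> x0 y0 x" and xc: "cost x < ennreal (a + \<epsilon>)"
      using pick[OF a e0 a0] by blast
    obtain z where za: "admissible \<Omega> x1 y1 z" and zc: "cost z < ennreal (b + \<epsilon>)"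
      using pick[OF b e0 b0] by blast
    obtain u1 Y1 X1 where n1: "nice \<Omega> x0 y0 u1 Y1 X1" and X1: "\<forall>s\<ge>0. X1 s = x s"
      using normalize[OF xa O0 cl] by blast
    obtain u2 Y2 X2 where n2: "nice \<Omega> x1 y1 u2 Y2 X2" and X2: "\<forall>s\<ge>0. X2 s = z s"
      using normalize[OF za O0 cl] by blast
    have cX1: "continuous_on UNIV X1" using nice_props[OF n1 R] by blast
    have cX2: "continuous_on UNIV X2" using nice_props[OF n2 R] by blast
    have c1: "cost X1 = cost x" by (rule cost_cong) (use X1 in auto)
    have c2: "cost X2 = cost z" by (rule cost_cong) (use X2 in auto)
    define W where "W s = t *\<^sub>R X1 s + (1-t) *\<^sub>R X2 s" for s
    define D where "D s = X1 s - X2 s" for s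
    have Wa: "admissible \<Omega> (fst (t *\<^sub>R p + (1 - t) *\<^sub>R q)) (snd (t *\<^sub>R p + (1 - t) *\<^sub>R q)) W"
      using mix_adm[OF n1 n2 R assms(1), of t] t0 t1 p q unfolding W_def[abs_def] by simp
    have BW: "bellman \<Omega> (t *\<^sub>R p + (1 - t) *\<^sub>R q) \<le> cost W"
      unfolding bellman_def using Wa by (intro INF_lower) simp
    have id: "cost W + ennreal (t*(1-t)) * cost D = ennreal t * cost X1 + ennreal (1-t) * cost X2"
      unfolding W_def[abs_def] D_def[abs_def] by (rule cost_identity[OF cX1 cX2]) (use t0 t1 in auto)
    have gD: "ennreal \<gamma> \<le> cost D"
      by (rule gap1) (use gap_cond[OF n1 n2 R] in \<open>auto simp: D_def\<close>)
    obtain c1r where c1r0: "0 \<le> c1r" and c1r: "cost X1 = ennreal c1r"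
      using xc c1 by (cases "cost X1" rule: ennreal_cases) auto
    obtain c2r where c2r0: "0 \<le> c2r" and c2r: "cost X2 = ennreal c2r"
      using zc c2 by (cases "cost X2" rule: ennreal_cases) auto
    have "ennreal c1r < ennreal (a + \<epsilon>)" using xc c1 c1r by simp
    then have lt1: "c1r < a + \<epsilon>" using ennreal_less_iff[OF c1r0] by blast
    have "ennreal c2r < ennreal (b + \<epsilon>)" using zc c2 c2r by simp
    then have lt2: "c2r < b + \<epsilon>" using ennreal_less_iff[OF c2r0] by blast
    have tt: "0 \<le> t" "0 \<le> 1 - t" "0 \<le> t * (1 - t)" using t0 t1 by auto
    have rhs: "ennreal t * cost X1 + ennreal (1-t) * cost X2 = ennreal (t * c1r + (1-t) * c2r)"
      unfolding c1r c2r by (rule enn_lin) (use tt c1r0 c2r0 in auto)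
    obtain cw where cw0: "0 \<le> cw" and cw: "cost W = ennreal cw"
    proof (cases "cost W" rule: ennreal_cases)
      case top
      then have "cost W + ennreal (t*(1-t)) * cost D = top" by simp
      then show ?thesis using id rhs by simp
    qed auto
    obtain cd where cd0: "0 \<le> cd" and cd: "cost D = ennreal cd"
    proof (cases "cost D" rule: ennreal_cases)
      case top
      have "t * (1 - t) > 0" using t0 t1 by simp
      then have "ennreal (t*(1-t)) * cost D = top" using top t0 t1 by (simp add: ennreal_mult_eq_top_iff)
      then show ?thesis using id rhs by simp
    qed auto
    have gle: "\<gamma> \<le> cd" using gD cd cd0 by (simp add: ennreal_le_iff)
    have "ennreal (cw + t*(1-t)*cd) = ennreal (t * c1r + (1-t) * c2r)"
      using id rhs unfolding cw cd enn_lin2[OF cw0 tt(3) cd0] by simp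
    then have eq: "cw + t*(1-t)*cd = t * c1r + (1-t) * c2r"
      using cw0 cd0 tt c1r0 c2r0 by (subst (asm) ennreal_inj) auto
    have m1: "t * c1r < t * (a + \<epsilon>)" using lt1 t0 by simp
    have m2: "(1-t) * c2r < (1-t) * (b + \<epsilon>)" using lt2 t1 by simp
    have m3: "t*(1-t)*\<gamma> \<le> t*(1-t)*cd" using gle tt by (simp add: mult_left_mono)
    have m1': "t * c1r < t * a + t * \<epsilon>" using m1 by (simp add: distrib_left)
    have m2': "(1-t) * c2r < (1-t) * b + (1-t) * \<epsilon>" using m2 by (simp add: distrib_left)
    have se: "t * \<epsilon> + (1-t) * \<epsilon> = \<epsilon>" by (simp add: algebra_simps)
    have ed: "\<epsilon> = (t*(1-t)*\<gamma>) / 2" by (simp add: \<epsilon>_def)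
    have "cw < t * a + (1-t) * b"
      using eq m1' m2' m3 se ed e0 by linarith
    then have "ennreal cw < ennreal (t * a + (1-t) * b)"
      using cw0 by (simp add: ennreal_less_iff)
    also have "\<dots> = ennreal t * bellman \<Omega> p + ennreal (1 - t) * bellman \<Omega> q"
      unfolding p q a b by (rule enn_lin[symmetric]) (use tt a0 b0 in auto)
    finally show "bellman \<Omega> (t *\<^sub>R p + (1 - t) *\<^sub>R q) < ennreal t * bellman \<Omega> p + ennreal (1 - t) * bellman \<Omega> q"
      using BW cw by (metis order.strict_trans1)
  qed
qed

end
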